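(* Let $N\ge 2$, let $D^N_1,\ldots,D^N_N$ satisfy (A1)–(A3) below, let lower-level demands $D^n_i$ be defined by the consistency recursion below and satisfy (A4), and let costs satisfy $0\le s_1\le s_2\le\cdots\le s_N$. Fix $n\in\{1,\ldots,N-1\}$ and prices $p_1,\ldots,p_{n-1}\ge 0$. If $D^n_n(p_1,\ldots,p_{n-1},s_n)\le 0$, then $D^{n+1}_{n+1}(p_1,\ldots,p_{n-1},s_n,s_{n+1})\le 0$.
   Context: (A1) Each $D_i^N:\mathbb{R}_+^N\to\mathbb{R}$ is smooth, $D_N^N(0,\ldots,0)>0$, $\partial D_i^N/\partial p_i<0$, $\partial D_i^N/\partial p_j>0$ for $j\ne i$. (A2) Exchangeability: $D_i^N(p_1,\ldots,p_i,\ldots,p_j,\ldots,p_N)=D_j^N(p_1,\ldots,p_j,\ldots,p_i,\ldots,p_N)$ for all $i,j$ (entries $i,j$ swapped). (A3) For every $i$ and every vector of other prices there is a finite choke price at which $D_i^N=0$. Consistency recursion: for $n=N-1,\ldots,1$, $D_i^n(p_1,\ldots,p_n)=D_i^{n+1}(p_1,\ldots,p_n,\hat p_{n+1})$ for $i\le n$, where $\hat p_{n+1}(p_1,\ldots,p_n)$ is the unique price with $D^{n+1}_{n+1}(p_1,\ldots,p_n,\hat p_{n+1})=0$. (A4) $\partial D^n_i/\partial p_i<0$ for all $n\le N-1$, $i\le n$. *)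

theory Defs
  imports "HOL-Analysis.Analysis"
begin

text \<open>Price vectors are functions nat => real; a price vector of an n-firm market
  uses coordinates 1..n, all other coordinates are 0.  A demand system is a family
  D :: nat => nat => (nat => real) => real, where D n i p is the demand of firm i in
  the n-firm market at prices p.\<close>

definition orthant :: "nat \<Rightarrow> (nat \<Rightarrow> real) set" where
  "orthant n = {p. (\<forall>i. 1 \<le> i \<and> i \<le> n \<longrightarrow> 0 \<le> p i) \<and> (\<forall>i. (i = 0 \<or> n < i) \<longrightarrow> p i = 0)}"

definition partial :: "nat \<Rightarrow> ((nat \<Rightarrow> real) \<Rightarrow> real) \<Rightarrow> (nat \<Rightarrow> real) \<Rightarrow> real" where
  "partial i f p = deriv (\<lambda>t. f (p(i := t))) (p i)"

definition smooth_on_orthant :: "nat \<Rightarrow> ((nat \<Rightarrow> real) \<Rightarrow> real) \<Rightarrow> bool" where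
  "smooth_on_orthant N f \<longleftrightarrow>
     (\<forall>js. set js \<subseteq> {1..N} \<longrightarrow>
        continuous_on (orthant N) (fold partial js f) \<and>
        (\<forall>p\<in>orthant N. \<forall>i\<in>{1..N}. (\<lambda>t. fold partial js f (p(i := t))) differentiable (at (p i))))"

definition choke_price :: "(nat \<Rightarrow> nat \<Rightarrow> (nat \<Rightarrow> real) \<Rightarrow> real) \<Rightarrow> nat \<Rightarrow> (nat \<Rightarrow> real) \<Rightarrow> real" where
  "choke_price D m p = (THE q. 0 \<le> q \<and> D (Suc m) (Suc m) (p(Suc m := q)) = 0)"

definition consistent :: "(nat \<Rightarrow> nat \<Rightarrow> (nat \<Rightarrow> real) \<Rightarrow> real) \<Rightarrow> nat \<Rightarrow> bool" where
  "consistent D N \<longleftrightarrow>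
     (\<forall>m. 1 \<le> m \<and> m < N \<longrightarrow> (\<forall>p\<in>orthant m.
        (\<exists>!q. 0 \<le> q \<and> D (Suc m) (Suc m) (p(Suc m := q)) = 0) \<and>
        (\<forall>i. 1 \<le> i \<and> i \<le> m \<longrightarrow> D m i p = D (Suc m) i (p(Suc m := choke_price D m p)))))"

end

theory Submission
  imports Defs
begin

theorem lemma2p1:
  fixes D :: "nat \<Rightarrow> nat \<Rightarrow> (nat \<Rightarrow> real) \<Rightarrow> real"
    and N n :: nat and s p :: "nat \<Rightarrow> real"
  assumes N2: "2 \<le> N"
    and A1_smooth: "\<forall>i. 1 \<le> i \<and> i \<le> N \<longrightarrow> smooth_on_orthant N (D N i)"
    and A1_pos: "D N N (\<lambda>_. 0) > 0"
    and A1_own: "\<forall>i. 1 \<le> i \<and> i \<le> N \<longrightarrow> (\<forall>p\<in>orthant N. partial i (D N i) p < 0)"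
    and A1_cross: "\<forall>i j. 1 \<le> i \<and> i \<le> N \<and> 1 \<le> j \<and> j \<le> N \<and> j \<noteq> i \<longrightarrow>
                     (\<forall>p\<in>orthant N. partial j (D N i) p > 0)"
    and A2: "\<forall>i j. 1 \<le> i \<and> i \<le> N \<and> 1 \<le> j \<and> j \<le> N \<longrightarrow>
                (\<forall>p\<in>orthant N. D N i p = D N j (p(i := p j, j := p i)))"
    and A3: "\<forall>i. 1 \<le> i \<and> i \<le> N \<longrightarrow> (\<forall>p\<in>orthant N. \<exists>q\<ge>0. D N i (p(i := q)) = 0)"
    and cons: "consistent D N"
    and A4: "\<forall>m i. 1 \<le> m \<and> m < N \<and> 1 \<le> i \<and> i \<le> m \<longrightarrow> (\<forall>p\<in>orthant m.
               \<exists>d<0. ((\<lambda>t. D m i (p(i := t))) has_real_derivative d) (at (p i)))"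
    and s_nonneg: "0 \<le> s 1"
    and s_mono: "\<forall>i. 1 \<le> i \<and> i < N \<longrightarrow> s i \<le> s (Suc i)"
    and n_range: "1 \<le> n" "n \<le> N - 1"
    and p_prices: "p \<in> orthant (n - 1)"
    and hyp: "D n n (p(n := s n)) \<le> 0"
  shows "D (Suc n) (Suc n) (p(n := s n, Suc n := s (Suc n))) \<le> 0"
proof -
  have orth_upd: "\<And>m j t q. q \<in> orthant m \<Longrightarrow> 1 \<le> j \<Longrightarrow> j \<le> m \<Longrightarrow> 0 \<le> t \<Longrightarrow> q(j := t) \<in> orthant m"
    unfolding orthant_def by auto
  have orth_ext: "\<And>m t q. q \<in> orthant m \<Longrightarrow> 0 \<le> t \<Longrightarrow> q(Suc m := t) \<in> orthant (Suc m)"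
    unfolding orthant_def by auto
  have orth_nonneg: "\<And>m j q. q \<in> orthant m \<Longrightarrow> 1 \<le> j \<Longrightarrow> j \<le> m \<Longrightarrow> 0 \<le> q j"
    unfolding orthant_def by auto
  have choke: "\<And>m q. 1 \<le> m \<Longrightarrow> m < N \<Longrightarrow> q \<in> orthant m \<Longrightarrow>
      0 \<le> choke_price D m q \<and> D (Suc m) (Suc m) (q(Suc m := choke_price D m q)) = 0 \<and>
      (\<forall>i. 1 \<le> i \<and> i \<le> m \<longrightarrow> D m i q = D (Suc m) i (q(Suc m := choke_price D m q)))"
  proof -
    fix m :: nat and q :: "nat \<Rightarrow> real" assume h: "1 \<le> m" "m < N" "q \<in> orthant m"
    have u: "\<exists>!c. 0 \<le> c \<and> D (Suc m) (Suc m) (q(Suc m := c)) = 0"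
      and e: "\<forall>i. 1 \<le> i \<and> i \<le> m \<longrightarrow> D m i q = D (Suc m) i (q(Suc m := choke_price D m q))"
      using cons h unfolding consistent_def by blast+
    have "0 \<le> choke_price D m q \<and> D (Suc m) (Suc m) (q(Suc m := choke_price D m q)) = 0"
      unfolding choke_price_def by (rule theI'[OF u])
    with e show "?thesis m q" by blast
  qed
  have diffN: "\<And>k q i. 1 \<le> k \<Longrightarrow> k \<le> N \<Longrightarrow> q \<in> orthant N \<Longrightarrow> 1 \<le> i \<Longrightarrow> i \<le> N \<Longrightarrow>
      (\<lambda>t. D N k (q(i := t))) differentiable (at (q i))"
  proof -
    fix k i :: nat and q :: "nat \<Rightarrow> real" assume h: "1 \<le> k" "k \<le> N" "q \<in> orthant N" "1 \<le> i" "i \<le> N"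
    have "smooth_on_orthant N (D N k)" using A1_smooth h by blast
    hence "\<forall>p\<in>orthant N. \<forall>i\<in>{1..N}. (\<lambda>t. fold partial [] (D N k) (p(i := t))) differentiable (at (p i))"
      unfolding smooth_on_orthant_def by (metis empty_set empty_subsetI)
    thus "?thesis k q i" using h by simp
  qed
  have ownd: "\<And>m i q. 1 \<le> m \<Longrightarrow> m \<le> N \<Longrightarrow> 1 \<le> i \<Longrightarrow> i \<le> m \<Longrightarrow> q \<in> orthant m \<Longrightarrow>
      \<exists>d<0. ((\<lambda>t. D m i (q(i := t))) has_real_derivative d) (at (q i))"
  proof -
    fix m i :: nat and q :: "nat \<Rightarrow> real" assume h: "1 \<le> m" "m \<le> N" "1 \<le> i" "i \<le> m" "q \<in> orthant m"
    show "?thesis m i q"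
    proof (cases "m < N")
      case True thus ?thesis using A4 h by blast
    next
      case False
      hence mN: "m = N" using h by simp
      have "(\<lambda>t. D N i (q(i := t))) differentiable (at (q i))"
        using diffN h mN by simp
      hence "((\<lambda>t. D N i (q(i := t))) has_real_derivative partial i (D N i) q) (at (q i))"
        unfolding partial_def by (simp add: DERIV_deriv_iff_real_differentiable)
      moreover have "partial i (D N i) q < 0" using A1_own h mN by blast
      ultimately show ?thesis using mN by blast
    qed
  qed
  have own: "\<And>m i q a b. 1 \<le> m \<Longrightarrow> m \<le> N \<Longrightarrow> 1 \<le> i \<Longrightarrow> i \<le> m \<Longrightarrow> q \<in> orthant m \<Longrightarrow>
      0 \<le> a \<Longrightarrow> a < b \<Longrightarrow> D m i (q(i := b)) < D m i (q(i := a))"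
  proof -
    fix m i :: nat and q :: "nat \<Rightarrow> real" and a b :: real assume h: "1 \<le> m" "m \<le> N" "1 \<le> i" "i \<le> m" "q \<in> orthant m" "0 \<le> a" "a < b"
    have "(\<lambda>t. D m i (q(i := t))) b < (\<lambda>t. D m i (q(i := t))) a"
    proof (rule DERIV_neg_imp_decreasing[OF h(7)])
      fix x assume x: "a \<le> x" "x \<le> b"
      have "q(i := x) \<in> orthant m" using orth_upd h x by simp
      from ownd[OF h(1-4) this] show "\<exists>y. ((\<lambda>t. D m i (q(i := t))) has_real_derivative y) (at x) \<and> y < 0"
        by auto
    qed
    thus "D m i (q(i := b)) < D m i (q(i := a))" by simp
  qed
  have own_le: "\<And>m i q a b. 1 \<le> m \<Longrightarrow> m \<le> N \<Longrightarrow> 1 \<le> i \<Longrightarrow> i \<le> m \<Longrightarrow> q \<in> orthant m \<Longrightarrow>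
      0 \<le> a \<Longrightarrow> a \<le> b \<Longrightarrow> D m i (q(i := b)) \<le> D m i (q(i := a))"
    by (metis order_le_less own)
  have crossN: "\<And>i j q t. 1 \<le> i \<Longrightarrow> i \<le> N \<Longrightarrow> 1 \<le> j \<Longrightarrow> j \<le> N \<Longrightarrow> i \<noteq> j \<Longrightarrow> q \<in> orthant N \<Longrightarrow>
      q j \<le> t \<Longrightarrow> D N i q \<le> D N i (q(j := t))"
  proof -
    fix i j :: nat and q :: "nat \<Rightarrow> real" and t :: real assume h: "1 \<le> i" "i \<le> N" "1 \<le> j" "j \<le> N" "i \<noteq> j" "q \<in> orthant N" "q j \<le> t"
    show "D N i q \<le> D N i (q(j := t))"
    proof (cases "q j = t")
      case True
      hence "q(j := t) = q" by auto
      thus ?thesis by simp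
    next
      case False
      hence lt: "q j < t" using h by simp
      have "(\<lambda>x. D N i (q(j := x))) (q j) < (\<lambda>x. D N i (q(j := x))) t"
      proof (rule DERIV_pos_imp_increasing[OF lt])
        fix x assume x: "q j \<le> x" "x \<le> t"
        have q0: "0 \<le> q j" using orth_nonneg h by blast
        have qx: "q(j := x) \<in> orthant N" using orth_upd h x q0 by simp
        have "(\<lambda>y. D N i ((q(j := x))(j := y))) differentiable (at ((q(j := x)) j))"
          using diffN h qx by blast
        hence "((\<lambda>y. D N i (q(j := y))) has_real_derivative partial j (D N i) (q(j := x))) (at x)"
          unfolding partial_def by (simp add: DERIV_deriv_iff_real_differentiable)
        moreover have "partial j (D N i) (q(j := x)) > 0" using A1_cross h qx by blast
        ultimately show "\<exists>y. ((\<lambda>y. D N i (q(j := y))) has_real_derivative y) (at x) \<and> y > 0" by blast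
      qed
      thus ?thesis by simp
    qed
  qed
  have cross: "\<And>m. 1 \<le> m \<Longrightarrow> m \<le> N \<Longrightarrow> (\<forall>i j q t. 1 \<le> i \<and> i \<le> m \<and> 1 \<le> j \<and> j \<le> m \<and> i \<noteq> j \<and> q \<in> orthant m \<and>
      q j \<le> t \<longrightarrow> D m i q \<le> D m i (q(j := t)))"
  proof -
    fix m assume m1: "1 \<le> m" and mN: "m \<le> N"
    show "?thesis m" using mN
    proof (induction m rule: inc_induct)
      case base thus ?case using crossN by blast
    next
      case (step k)
      have k1: "1 \<le> k" using m1 step.hyps by simp
      show ?case
      proof (intro allI impI)
        fix i j :: nat and q :: "nat \<Rightarrow> real" and t :: real assume h: "1 \<le> i \<and> i \<le> k \<and> 1 \<le> j \<and> j \<le> k \<and> i \<noteq> j \<and> q \<in> orthant k \<and> q j \<le> t"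
        have q0: "0 \<le> q j" using orth_nonneg h by blast
        have q': "q(j := t) \<in> orthant k" using orth_upd h q0 by simp
        define c where "c = choke_price D k q"
        define c' where "c' = choke_price D k (q(j := t))"
        have C: "0 \<le> c" "D (Suc k) (Suc k) (q(Suc k := c)) = 0" "D k i q = D (Suc k) i (q(Suc k := c))"
          using choke[OF k1 step.hyps(2)] h unfolding c_def by auto
        have C': "0 \<le> c'" "D (Suc k) (Suc k) ((q(j := t))(Suc k := c')) = 0"
          "D k i (q(j := t)) = D (Suc k) i ((q(j := t))(Suc k := c'))"
          using choke[OF k1 step.hyps(2) q'] h unfolding c'_def by auto
        have IH: "\<And>i j q t. 1 \<le> i \<Longrightarrow> i \<le> Suc k \<Longrightarrow> 1 \<le> j \<Longrightarrow> j \<le> Suc k \<Longrightarrow> i \<noteq> j \<Longrightarrow> q \<in> orthant (Suc k) \<Longrightarrow>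
            q j \<le> t \<Longrightarrow> D (Suc k) i q \<le> D (Suc k) i (q(j := t))"
          using step.IH by blast
        have y: "q(Suc k := c) \<in> orthant (Suc k)" using orth_ext h C by simp
        have y': "(q(j := t))(Suc k := c) \<in> orthant (Suc k)" using orth_ext q' C by simp
        have sk: "Suc k \<le> N" using step.hyps by simp
        have cc: "c \<le> c'"
        proof (rule ccontr)
          assume "\<not> c \<le> c'"
          hence lt: "c' < c" by simp
          have "D (Suc k) (Suc k) (((q(j := t))(Suc k := c))(Suc k := c)) <
                D (Suc k) (Suc k) (((q(j := t))(Suc k := c))(Suc k := c'))"
            by (rule own[OF _ sk _ _ y' C'(1) lt]) auto
          hence a: "D (Suc k) (Suc k) ((q(j := t))(Suc k := c)) < 0" using C' by simp
          have "D (Suc k) (Suc k) (q(Suc k := c)) \<le> D (Suc k) (Suc k) ((q(Suc k := c))(j := t))"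
            by (rule IH[OF _ _ _ _ _ y]) (use h in auto)
          moreover have "(q(Suc k := c))(j := t) = (q(j := t))(Suc k := c)"
            using h by (auto simp: fun_upd_twist)
          ultimately show False using a C by simp
        qed
        have "D k i q = D (Suc k) i (q(Suc k := c))" by (rule C(3))
        also have "\<dots> \<le> D (Suc k) i ((q(Suc k := c))(j := t))"
          by (rule IH[OF _ _ _ _ _ y]) (use h in auto)
        also have "(q(Suc k := c))(j := t) = (q(j := t))(Suc k := c)"
          using h by (auto simp: fun_upd_twist)
        also have "D (Suc k) i \<dots> \<le> D (Suc k) i (((q(j := t))(Suc k := c))(Suc k := c'))"
          by (rule IH[OF _ _ _ _ _ y']) (use h cc in auto)
        also have "\<dots> = D k i (q(j := t))" using C' by simp
        finally show "D k i q \<le> D k i (q(j := t))" .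
      qed
    qed
  qed
  have sym: "\<And>m. 1 \<le> m \<Longrightarrow> m \<le> N \<Longrightarrow> (\<forall>i j q. 1 \<le> i \<and> i \<le> m \<and> 1 \<le> j \<and> j \<le> m \<and> q \<in> orthant m \<and>
      q i = q j \<longrightarrow> D m i q = D m j q)"
  proof -
    fix m assume m1: "1 \<le> m" and mN: "m \<le> N"
    show "?thesis m" using mN
    proof (induction m rule: inc_induct)
      case base
      show ?case
      proof (intro allI impI)
        fix i j :: nat and q :: "nat \<Rightarrow> real" assume h: "1 \<le> i \<and> i \<le> N \<and> 1 \<le> j \<and> j \<le> N \<and> q \<in> orthant N \<and> q i = q j"
        have "D N i q = D N j (q(i := q j, j := q i))" using A2 h by blast
        moreover have "q(i := q j, j := q i) = q" using h by auto
        ultimately show "D N i q = D N j q" by simp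
      qed
    next
      case (step k)
      have k1: "1 \<le> k" using m1 step.hyps by simp
      show ?case
      proof (intro allI impI)
        fix i j :: nat and q :: "nat \<Rightarrow> real" assume h: "1 \<le> i \<and> i \<le> k \<and> 1 \<le> j \<and> j \<le> k \<and> q \<in> orthant k \<and> q i = q j"
        define c where "c = choke_price D k q"
        have C: "0 \<le> c" "D k i q = D (Suc k) i (q(Suc k := c))" "D k j q = D (Suc k) j (q(Suc k := c))"
          using choke[OF k1 step.hyps(2)] h unfolding c_def by auto
        have y: "q(Suc k := c) \<in> orthant (Suc k)" using orth_ext h C by simp
        have "D (Suc k) i (q(Suc k := c)) = D (Suc k) j (q(Suc k := c))"
          using step.IH[rule_format, of i j "q(Suc k := c)"] y h by simp
        thus "D k i q = D k j q" using C by simp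
      qed
    qed
  qed
  have nN: "n < N" using n_range N2 by simp
  have sn: "0 \<le> s n"
  proof -
    have "\<And>kk. 1 \<le> kk \<Longrightarrow> kk \<le> n \<Longrightarrow> s 1 \<le> s kk"
    proof -
      fix kk assume kk: "1 \<le> kk" "kk \<le> n"
      thus "s 1 \<le> s kk"
      proof (induction kk rule: dec_induct)
        case base thus ?case by simp
      next
        case (step k)
        have "s k \<le> s (Suc k)" using s_mono step.hyps nN kk by simp
        moreover have "s 1 \<le> s k" using step.IH step.hyps kk by simp
        ultimately show ?case by simp
      qed
    qed
    thus ?thesis using n_range s_nonneg by fastforce
  qed
  have ss: "s n \<le> s (Suc n)" using s_mono nN n_range by simp
  define q where "q = p(n := s n)"
  have q: "q \<in> orthant n" using p_prices sn n_range unfolding q_def orthant_def by auto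
  define c where "c = choke_price D n q"
  have C: "0 \<le> c" "D (Suc n) (Suc n) (q(Suc n := c)) = 0" "D n n q = D (Suc n) n (q(Suc n := c))"
    using choke[OF n_range(1) nN q] n_range unfolding c_def by auto
  have sN: "Suc n \<le> N" using nN by simp
  have y: "\<And>t. 0 \<le> t \<Longrightarrow> q(Suc n := t) \<in> orthant (Suc n)" using orth_ext q by simp
  have goal: "D (Suc n) (Suc n) (q(Suc n := s (Suc n))) \<le> 0"
  proof (cases "c \<le> s (Suc n)")
    case True
    have "D (Suc n) (Suc n) ((q(Suc n := c))(Suc n := s (Suc n))) \<le> D (Suc n) (Suc n) ((q(Suc n := c))(Suc n := c))"
      by (rule own_le[OF _ sN _ _ y[OF C(1)] C(1) True]) auto
    thus ?thesis using C by simp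
  next
    case False
    have "D (Suc n) (Suc n) (q(Suc n := s (Suc n))) = D (Suc n) (Suc n) ((q(Suc n := s n))(Suc n := s (Suc n)))"
      by simp
    also have "\<dots> \<le> D (Suc n) (Suc n) ((q(Suc n := s n))(Suc n := s n))"
      by (rule own_le[OF _ sN _ _ y[OF sn] sn ss]) auto
    also have "\<dots> = D (Suc n) n (q(Suc n := s n))"
      using sym[OF _ sN] y[OF sn] n_range unfolding q_def by auto
    also have "\<dots> \<le> D (Suc n) n ((q(Suc n := s n))(Suc n := c))"
      using cross[OF _ sN, rule_format, of n "Suc n" "q(Suc n := s n)" c] y[OF sn] n_range False ss by simp
    also have "\<dots> = D n n q" using C by simp
    finally show ?thesis using hyp unfolding q_def by simp
  qed
  thus ?thesis unfolding q_def by simp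
qed

end
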